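(* Let $A$ and $A'$ be hyperoperators on $\mathbb{R}^n$ on the complex Banach space $X$ such that $D_A\cap D_{A'}$ is dense in $X$. Assume there is a dense subspace $D\subset D_A\cap D_{A'}$ such that for each $j=1,\dots,n$, $a_j=a'_j$ on $D$ and $a_j$ maps $D$ into $D$. Then $A=A'$.
   Context: $X$ is a complex Banach space, $L(X)$ the bounded operators. $\mathcal{D}(\mathbb{R}^n)=C_c^\infty(\mathbb{R}^n)$ (complex-valued). A hyperoperator on $\mathbb{R}^n$ is a linear map $A:\mathcal{D}(\mathbb{R}^n)\to L(X)$ which is continuous ($A(\phi_j)\to0$ in operator norm when $\phi_j\to0$ in $\mathcal{D}(\mathbb{R}^n)$), multiplicative ($A(\phi\psi)=A(\phi)A(\psi)$), and such that (i) $D_A:=\bigcup_\phi\operatorname{Im}A(\phi)$ is dense and (ii) $\bigcap_\phi\operatorname{Ker}A(\phi)=\{0\}$. For smooth $f:\mathbb{R}^n\to\mathbb{R}$ and $x\in D_A$ written $x=A(\phi)y$, set $f(a)x:=A(f\phi)y$ (well defined). The associated operators are $a_j:=f_j(a)$ with $f_j(\xi)=\xi_j$, defined on $D_A$; similarly $a'_j$ for $A'$ on $D_{A'}$. *)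

theory Defs
  imports "HOL-Analysis.Analysis"
begin

class complex_banach = banach +
  fixes scaleC :: "complex \<Rightarrow> 'a \<Rightarrow> 'a" (infixr \<open>*\<^sub>C\<close> 75)
  assumes scaleC_add_right: "c *\<^sub>C (x + y) = c *\<^sub>C x + c *\<^sub>C y"
    and scaleC_add_left: "(b + c) *\<^sub>C x = b *\<^sub>C x + c *\<^sub>C x"
    and scaleC_scaleC: "b *\<^sub>C (c *\<^sub>C x) = (b * c) *\<^sub>C x"
    and scaleC_one: "1 *\<^sub>C x = x"
    and scaleR_scaleC: "r *\<^sub>R x = complex_of_real r *\<^sub>C x"
    and norm_scaleC: "norm (c *\<^sub>C x) = cmod c * norm x"

definition csubspace :: "'x::complex_banach set \<Rightarrow> bool" where
  "csubspace D \<longleftrightarrow> 0 \<in> D \<and> (\<forall>x\<in>D. \<forall>y\<in>D. x + y \<in> D) \<and> (\<forall>c. \<forall>x\<in>D. c *\<^sub>C x \<in> D)"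

coinductive smooth :: "('a::euclidean_space \<Rightarrow> 'b::real_normed_vector) \<Rightarrow> bool" where
  "(\<forall>x. f differentiable (at x)) \<Longrightarrow>
   (\<forall>i\<in>Basis. smooth (\<lambda>x. frechet_derivative f (at x) i)) \<Longrightarrow> smooth f"

definition test_fun :: "('a::euclidean_space \<Rightarrow> complex) \<Rightarrow> bool" where
  "test_fun \<phi> \<longleftrightarrow> smooth \<phi> \<and> compact (closure {x. \<phi> x \<noteq> 0})"

fun pderivs :: "'a::euclidean_space list \<Rightarrow> ('a \<Rightarrow> 'b::real_normed_vector) \<Rightarrow> 'a \<Rightarrow> 'b" where
  "pderivs [] f = f"
| "pderivs (i # is) f = (\<lambda>x. frechet_derivative (pderivs is f) (at x) i)"

definition test_tendsto0 :: "(nat \<Rightarrow> 'a::euclidean_space \<Rightarrow> complex) \<Rightarrow> bool" where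
  "test_tendsto0 \<phi>s \<longleftrightarrow> (\<forall>k. test_fun (\<phi>s k)) \<and>
     (\<exists>K. compact K \<and> (\<forall>k. {x. \<phi>s k x \<noteq> 0} \<subseteq> K)) \<and>
     (\<forall>is. set is \<subseteq> Basis \<longrightarrow>
        (\<forall>e>0. \<forall>\<^sub>F k in sequentially. \<forall>x. norm (pderivs is (\<phi>s k) x) < e))"

definition domA :: "(('a::euclidean_space \<Rightarrow> complex) \<Rightarrow> 'x::complex_banach \<Rightarrow>\<^sub>L 'x) \<Rightarrow> 'x set" where
  "domA A = (\<Union>\<phi>\<in>{\<phi>. test_fun \<phi>}. range (blinfun_apply (A \<phi>)))"

definition hyperop :: "(('a::euclidean_space \<Rightarrow> complex) \<Rightarrow> 'x::complex_banach \<Rightarrow>\<^sub>L 'x) \<Rightarrow> bool" where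
  "hyperop A \<longleftrightarrow>
     \<comment> \<open>values are bounded complex-linear operators\<close>
     (\<forall>\<phi>. test_fun \<phi> \<longrightarrow> (\<forall>c x. A \<phi> (c *\<^sub>C x) = c *\<^sub>C A \<phi> x)) \<and>
     \<comment> \<open>A is complex linear\<close>
     (\<forall>\<phi> \<psi>. test_fun \<phi> \<longrightarrow> test_fun \<psi> \<longrightarrow> A (\<lambda>t. \<phi> t + \<psi> t) = A \<phi> + A \<psi>) \<and>
     (\<forall>\<phi> c x. test_fun \<phi> \<longrightarrow> A (\<lambda>t. c * \<phi> t) x = c *\<^sub>C A \<phi> x) \<and>
     \<comment> \<open>continuous\<close>
     (\<forall>\<phi>s. test_tendsto0 \<phi>s \<longrightarrow> (\<lambda>k. norm (A (\<phi>s k))) \<longlonglongrightarrow> 0) \<and>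
     \<comment> \<open>multiplicative\<close>
     (\<forall>\<phi> \<psi>. test_fun \<phi> \<longrightarrow> test_fun \<psi> \<longrightarrow> A (\<lambda>t. \<phi> t * \<psi> t) = A \<phi> o\<^sub>L A \<psi>) \<and>
     \<comment> \<open>(i) D_A dense\<close>
     closure (domA A) = UNIV \<and>
     \<comment> \<open>(ii) common kernel trivial\<close>
     {x. \<forall>\<phi>. test_fun \<phi> \<longrightarrow> A \<phi> x = 0} = {0}"

text \<open>f(a)x := A(f phi) y where x = A(phi) y\<close>
definition fcalc :: "(('a::euclidean_space \<Rightarrow> complex) \<Rightarrow> 'x::complex_banach \<Rightarrow>\<^sub>L 'x)
    \<Rightarrow> ('a \<Rightarrow> real) \<Rightarrow> 'x \<Rightarrow> 'x" where
  "fcalc A f x = (SOME z. \<exists>\<phi> y. test_fun \<phi> \<and> x = A \<phi> y \<and>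
                      z = A (\<lambda>t. complex_of_real (f t) * \<phi> t) y)"

text \<open>The generator a_j = f_j(a), f_j(xi) = xi_j\<close>
definition coord_op :: "((real^'n \<Rightarrow> complex) \<Rightarrow> 'x::complex_banach \<Rightarrow>\<^sub>L 'x) \<Rightarrow> 'n \<Rightarrow> 'x \<Rightarrow> 'x" where
  "coord_op A j = fcalc A (\<lambda>\<xi>. \<xi> $ j)"

end

theory Submission
  imports Defs
begin

definition pd :: "'a::euclidean_space \<Rightarrow> ('a \<Rightarrow> 'b::real_normed_vector) \<Rightarrow> 'a \<Rightarrow> 'b" where
  "pd i f = (\<lambda>x. frechet_derivative f (at x) i)"

lemma pderivs_Cons: "pderivs (i # is) f = pd i (pderivs is f)"
  by (simp add: pd_def)

lemma pderivs_snoc: "pderivs (is @ [i]) f = pderivs is (pd i f)"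
  by (induction "is") (auto simp: pd_def)

lemma smooth_diff: "smooth f \<Longrightarrow> f differentiable (at x)"
  by (erule smooth.cases) auto

lemma smooth_pd: "smooth f \<Longrightarrow> i \<in> Basis \<Longrightarrow> smooth (pd i f)"
  unfolding pd_def by (erule smooth.cases) auto

lemma smooth_pderivs: "smooth f \<Longrightarrow> set is \<subseteq> Basis \<Longrightarrow> smooth (pderivs is f)"
  by (induction "is") (auto simp del: pderivs.simps(2) simp: pderivs_Cons smooth_pd)

lemma smooth_cont: "smooth f \<Longrightarrow> continuous_on S f"
  by (meson continuous_at_imp_continuous_on differentiable_imp_continuous_within smooth_diff)

lemma smooth_pd_cont: "smooth f \<Longrightarrow> i \<in> Basis \<Longrightarrow> continuous_on S (pd i f)"
  by (simp add: smooth_cont smooth_pd)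

lemma smooth_has_derivative: "smooth f \<Longrightarrow> (f has_derivative frechet_derivative f (at x)) (at x)"
  using frechet_derivative_works smooth_diff by blast

lemma smooth_const: "smooth (\<lambda>x. c)"
proof -
  have "\<forall>c. smooth (\<lambda>x::'a. c::'b)"
  proof
    fix c :: 'b
    show "smooth (\<lambda>x::'a. c)"
      by (rule smooth.coinduct[where X="\<lambda>f. \<exists>c. f = (\<lambda>x. c)"]) auto
  qed
  then show ?thesis by blast
qed

lemma pd_add:
  assumes "f differentiable (at x)" "g differentiable (at x)"
  shows "pd i (\<lambda>x. f x + g x) x = pd i f x + pd i g x"
proof -
  have "((\<lambda>x. f x + g x) has_derivative (\<lambda>h. frechet_derivative f (at x) h + frechet_derivative g (at x) h)) (at x)"
    using assms by (intro has_derivative_add) (auto simp: frechet_derivative_works)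
  then show ?thesis unfolding pd_def using frechet_derivative_at by metis
qed

lemma smooth_add: "smooth f \<Longrightarrow> smooth g \<Longrightarrow> smooth (\<lambda>x. f x + g x)"
proof -
  assume "smooth f" "smooth g"
  then show ?thesis
  proof (coinduction arbitrary: f g rule: smooth.coinduct)
    case (smooth f g)
    have d: "\<And>x. (\<lambda>x. f x + g x) differentiable (at x)"
      using smooth smooth_diff by (intro differentiable_add) auto
    have "pd i (\<lambda>x. f x + g x) = (\<lambda>x. pd i f x + pd i g x)" for i
      using smooth smooth_diff pd_add by blast
    then show ?case using d smooth smooth_pd unfolding pd_def
      by (metis (no_types, lifting))
  qed
qed

definition SP :: "(('a \<Rightarrow> complex) \<times> ('a \<Rightarrow> complex)) list \<Rightarrow> 'a \<Rightarrow> complex" where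
  "SP ls = (\<lambda>x. sum_list (map (\<lambda>p. fst p x * snd p x) ls))"

definition SPd :: "'a::euclidean_space \<Rightarrow> (('a \<Rightarrow> complex) \<times> ('a \<Rightarrow> complex)) list \<Rightarrow> (('a \<Rightarrow> complex) \<times> ('a \<Rightarrow> complex)) list" where
  "SPd i ls = concat (map (\<lambda>p. [(fst p, pd i (snd p)), (pd i (fst p), snd p)]) ls)"

lemma SP_has_derivative:
  fixes ls :: "(('a::euclidean_space \<Rightarrow> complex) \<times> ('a \<Rightarrow> complex)) list"
  assumes "\<forall>p\<in>set ls. fst p differentiable (at x) \<and> snd p differentiable (at x)"
  shows "(SP ls has_derivative (\<lambda>h. sum_list (map (\<lambda>p. fst p x * frechet_derivative (snd p) (at x) h
      + frechet_derivative (fst p) (at x) h * snd p x) ls))) (at x)"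
  using assms
proof (induction ls)
  case Nil
  then show ?case by (simp add: SP_def)
next
  case (Cons p ls)
  have "((\<lambda>x. fst p x * snd p x + SP ls x) has_derivative (\<lambda>h. (fst p x * frechet_derivative (snd p) (at x) h
      + frechet_derivative (fst p) (at x) h * snd p x) + sum_list (map (\<lambda>p. fst p x * frechet_derivative (snd p) (at x) h
      + frechet_derivative (fst p) (at x) h * snd p x) ls))) (at x)"
    using Cons by (intro has_derivative_add has_derivative_mult) (auto simp: frechet_derivative_works)
  then show ?case by (simp add: SP_def)
qed

lemma SP_pd:
  fixes ls :: "(('a::euclidean_space \<Rightarrow> complex) \<times> ('a \<Rightarrow> complex)) list"
  assumes "\<forall>p\<in>set ls. smooth (fst p) \<and> smooth (snd p)"
  shows "pd i (SP ls) = SP (SPd i ls)" "SP ls differentiable (at x)"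
proof -
  have "pd i (SP ls) x = SP (SPd i ls) x" for x
  proof -
    have "pd i (SP ls) x = sum_list (map (\<lambda>p. fst p x * frechet_derivative (snd p) (at x) i
      + frechet_derivative (fst p) (at x) i * snd p x) ls)"
      using SP_has_derivative[of ls x] assms smooth_diff unfolding pd_def
      by (metis (no_types, lifting) frechet_derivative_at)
    also have "\<dots> = SP (SPd i ls) x"
      by (induction ls) (auto simp: SP_def SPd_def pd_def)
    finally show ?thesis .
  qed
  then show "pd i (SP ls) = SP (SPd i ls)" by auto
  show "SP ls differentiable (at x)"
    using SP_has_derivative[of ls x] assms smooth_diff differentiable_def by blast
qed

lemma smooth_SP:
  fixes ls :: "(('a::euclidean_space \<Rightarrow> complex) \<times> ('a \<Rightarrow> complex)) list"
  assumes "\<forall>p\<in>set ls. smooth (fst p) \<and> smooth (snd p)"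
  shows "smooth (SP ls)"
  using assms
proof (coinduction arbitrary: ls rule: smooth.coinduct)
  case (smooth ls)
  have "\<forall>p\<in>set (SPd i ls). smooth (fst p) \<and> smooth (snd p)" if "i \<in> Basis" for i
    using smooth that by (auto simp: SPd_def smooth_pd)
  then show ?case using SP_pd[OF smooth] unfolding pd_def by metis
qed

lemma smooth_mult:
  fixes f g :: "'a::euclidean_space \<Rightarrow> complex"
  assumes "smooth f" "smooth g"
  shows "smooth (\<lambda>x. f x * g x)"
proof -
  have "smooth (SP [(f,g)])" using assms by (intro smooth_SP) auto
  then show ?thesis by (simp add: SP_def)
qed

lemma smooth_of_real_coord: "smooth (\<lambda>x::real^'n. complex_of_real (x $ j))"
proof -
  have d: "((\<lambda>x::real^'n. complex_of_real (x $ j)) has_derivative (\<lambda>h. complex_of_real (h $ j))) (at x)" for x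
    by (intro has_derivative_of_real bounded_linear_imp_has_derivative bounded_linear_vec_nth)
  then have "pd i (\<lambda>x::real^'n. complex_of_real (x $ j)) = (\<lambda>x. complex_of_real (i $ j))" for i
    unfolding pd_def by (metis frechet_derivative_at)
  then show ?thesis using d
    by (intro smooth.intros) (auto simp: differentiable_def smooth_const pd_def[symmetric])
qed

lemma smooth_cmult: "smooth f \<Longrightarrow> smooth (\<lambda>x. (c::complex) * f x)"
  using smooth_mult[OF smooth_const] by blast

lemma smooth_minus: "smooth f \<Longrightarrow> smooth g \<Longrightarrow> smooth (\<lambda>x. f x - (g x::complex))"
  using smooth_add[OF _ smooth_cmult[of g "-1"], of f] by simp

inductive_set Pol :: "(real^'n \<Rightarrow> complex) set" where
  Pol_const: "(\<lambda>x. c) \<in> Pol"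
| Pol_coord: "(\<lambda>x. complex_of_real (x $ j)) \<in> Pol"
| Pol_add: "p \<in> Pol \<Longrightarrow> q \<in> Pol \<Longrightarrow> (\<lambda>x. p x + q x) \<in> Pol"
| Pol_mult: "p \<in> Pol \<Longrightarrow> q \<in> Pol \<Longrightarrow> (\<lambda>x. p x * q x) \<in> Pol"

lemma Pol_smooth: "p \<in> Pol \<Longrightarrow> smooth p"
  by (induction rule: Pol.induct) (auto intro: smooth_const smooth_of_real_coord smooth_add smooth_mult)

lemma test_fun_mult:
  fixes g \<psi> :: "'a::euclidean_space \<Rightarrow> complex"
  assumes "smooth g" "test_fun \<psi>"
  shows "test_fun (\<lambda>t. g t * \<psi> t)"
proof -
  have "bounded {x. \<psi> x \<noteq> 0}" using assms(2) unfolding test_fun_def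
    using compact_closure by blast
  then have "bounded {x. g x * \<psi> x \<noteq> 0}" by (rule bounded_subset) auto
  then have "compact (closure {x. g x * \<psi> x \<noteq> 0})" using compact_closure by blast
  moreover have "smooth (\<lambda>t. g t * \<psi> t)" using assms smooth_mult unfolding test_fun_def by blast
  ultimately show ?thesis unfolding test_fun_def by blast
qed

lemma test_fun_smooth: "test_fun f \<Longrightarrow> smooth f" by (simp add: test_fun_def)

context
  fixes A :: "('a::euclidean_space \<Rightarrow> complex) \<Rightarrow> 'x::complex_banach \<Rightarrow>\<^sub>L 'x"
  assumes hA: "hyperop A"
begin

lemma hyp_add: "test_fun \<phi> \<Longrightarrow> test_fun \<psi> \<Longrightarrow> A (\<lambda>t. \<phi> t + \<psi> t) = A \<phi> + A \<psi>"
  using hA unfolding hyperop_def by simp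

lemma hyp_cmult: "test_fun \<phi> \<Longrightarrow> A (\<lambda>t. c * \<phi> t) x = c *\<^sub>C A \<phi> x"
  using hA unfolding hyperop_def by simp

lemma hyp_mult: "test_fun \<phi> \<Longrightarrow> test_fun \<psi> \<Longrightarrow> A (\<lambda>t. \<phi> t * \<psi> t) = A \<phi> o\<^sub>L A \<psi>"
  using hA unfolding hyperop_def by simp

lemma hyp_cont: "test_tendsto0 \<phi>s \<Longrightarrow> (\<lambda>k. norm (A (\<phi>s k))) \<longlonglongrightarrow> 0"
  using hA unfolding hyperop_def by simp

lemma hyp_ker: "(\<And>\<phi>. test_fun \<phi> \<Longrightarrow> A \<phi> x = 0) \<Longrightarrow> x = 0"
proof -
  assume a: "\<And>\<phi>. test_fun \<phi> \<Longrightarrow> A \<phi> x = 0"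
  have "{x. \<forall>\<phi>. test_fun \<phi> \<longrightarrow> A \<phi> x = 0} = {0}" using hA unfolding hyperop_def by simp
  then show "x = 0" using a by blast
qed

lemma fcalc_uniq:
  assumes f: "\<And>\<theta>. test_fun \<theta> \<Longrightarrow> test_fun (\<lambda>t. complex_of_real (f t) * \<theta> t)"
    and t1: "test_fun ch1" and t2: "test_fun ch2" and eq: "A ch1 w1 = A ch2 w2"
  shows "A (\<lambda>t. complex_of_real (f t) * ch1 t) w1 = A (\<lambda>t. complex_of_real (f t) * ch2 t) w2"
proof -
  have key: "A \<theta> (A (\<lambda>t. complex_of_real (f t) * ch t) w) = A (\<lambda>t. complex_of_real (f t) * \<theta> t) (A ch w)"
    if "test_fun \<theta>" "test_fun ch" for \<theta> ch w
  proof -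
    have "A \<theta> (A (\<lambda>t. complex_of_real (f t) * ch t) w) = A (\<lambda>t. \<theta> t * (complex_of_real (f t) * ch t)) w"
      using hyp_mult[of \<theta> "\<lambda>t. complex_of_real (f t) * ch t"] that f by simp
    also have "(\<lambda>t. \<theta> t * (complex_of_real (f t) * ch t)) = (\<lambda>t. (complex_of_real (f t) * \<theta> t) * ch t)"
      by (auto simp: mult_ac)
    also have "A \<dots> w = A (\<lambda>t. complex_of_real (f t) * \<theta> t) (A ch w)"
      using hyp_mult[of "\<lambda>t. complex_of_real (f t) * \<theta> t" ch] that f by simp
    finally show ?thesis .
  qed
  have "A (\<lambda>t. complex_of_real (f t) * ch1 t) w1 - A (\<lambda>t. complex_of_real (f t) * ch2 t) w2 = 0"
  proof (rule hyp_ker)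
    fix \<theta> :: "'a \<Rightarrow> complex" assume "test_fun \<theta>"
    then show "A \<theta> (A (\<lambda>t. complex_of_real (f t) * ch1 t) w1 - A (\<lambda>t. complex_of_real (f t) * ch2 t) w2) = 0"
      using key[of \<theta> ch1 w1] key[of \<theta> ch2 w2] t1 t2 eq by (simp add: blinfun.diff_right)
  qed
  then show ?thesis by simp
qed

lemma fcalc_eq:
  assumes f: "\<And>\<theta>. test_fun \<theta> \<Longrightarrow> test_fun (\<lambda>t. complex_of_real (f t) * \<theta> t)"
    and t: "test_fun ch" and z: "z = A ch w"
  shows "fcalc A f z = A (\<lambda>t. complex_of_real (f t) * ch t) w"
  unfolding fcalc_def
proof (rule someI2)
  show "\<exists>\<phi> y. test_fun \<phi> \<and> z = A \<phi> y \<and> A (\<lambda>t. complex_of_real (f t) * ch t) w = A (\<lambda>t. complex_of_real (f t) * \<phi> t) y"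
    using t z by blast
next
  fix u assume "\<exists>\<phi> y. test_fun \<phi> \<and> z = A \<phi> y \<and> u = A (\<lambda>t. complex_of_real (f t) * \<phi> t) y"
  then obtain \<phi> y where o: "test_fun \<phi>" "z = A \<phi> y" "u = A (\<lambda>t. complex_of_real (f t) * \<phi> t) y" by blast
  then show "u = A (\<lambda>t. complex_of_real (f t) * ch t) w"
    using fcalc_uniq[OF f o(1) t, of y w] z by simp
qed

end

lemma coord_op_eq:
  fixes A :: "(real^'n \<Rightarrow> complex) \<Rightarrow> 'x::complex_banach \<Rightarrow>\<^sub>L 'x"
  assumes "hyperop A" "test_fun ch" "z = A ch w"
  shows "coord_op A j z = A (\<lambda>t. complex_of_real (t $ j) * ch t) w"
  unfolding coord_op_def
  using fcalc_eq[OF assms(1), of "\<lambda>t. t $ j"] assms(2,3) test_fun_mult[OF smooth_of_real_coord]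
  by blast

definition Gset :: "((real^'n \<Rightarrow> complex) \<Rightarrow> 'x::complex_banach \<Rightarrow>\<^sub>L 'x) \<Rightarrow> ((real^'n \<Rightarrow> complex) \<Rightarrow> 'x \<Rightarrow>\<^sub>L 'x) \<Rightarrow> 'x set \<Rightarrow> (real^'n \<Rightarrow> complex) set" where
  "Gset A A' D = {g. smooth g \<and> (\<forall>x\<in>D. \<forall>\<psi> y \<psi>' y'. test_fun \<psi> \<longrightarrow> test_fun \<psi>' \<longrightarrow> x = A \<psi> y \<longrightarrow> x = A' \<psi>' y' \<longrightarrow>
     A (\<lambda>t. g t * \<psi> t) y = A' (\<lambda>t. g t * \<psi>' t) y' \<and> A (\<lambda>t. g t * \<psi> t) y \<in> D)}"

lemma GsetI:
  fixes A A' :: "(real^'n \<Rightarrow> complex) \<Rightarrow> 'x::complex_banach \<Rightarrow>\<^sub>L 'x"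
  assumes "smooth g"
    and "\<And>x \<psi> y \<psi>' y'. x \<in> D \<Longrightarrow> test_fun \<psi> \<Longrightarrow> test_fun \<psi>' \<Longrightarrow> x = A \<psi> y \<Longrightarrow> x = A' \<psi>' y' \<Longrightarrow>
     A (\<lambda>t. g t * \<psi> t) y = A' (\<lambda>t. g t * \<psi>' t) y' \<and> A (\<lambda>t. g t * \<psi> t) y \<in> D"
  shows "g \<in> Gset A A' D"
  using assms unfolding Gset_def mem_Collect_eq by blast

lemma GsetD:
  fixes A A' :: "(real^'n \<Rightarrow> complex) \<Rightarrow> 'x::complex_banach \<Rightarrow>\<^sub>L 'x"
  assumes "g \<in> Gset A A' D" "x \<in> D" "test_fun \<psi>" "test_fun \<psi>'" "x = A \<psi> y" "x = A' \<psi>' y'"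
  shows "A (\<lambda>t. g t * \<psi> t) y = A' (\<lambda>t. g t * \<psi>' t) y'" "A (\<lambda>t. g t * \<psi> t) y \<in> D" "smooth g"
  using assms unfolding Gset_def mem_Collect_eq by blast+

context
  fixes A A' :: "(real^'n \<Rightarrow> complex) \<Rightarrow> 'x::complex_banach \<Rightarrow>\<^sub>L 'x"
    and D :: "'x set"
  assumes hA: "hyperop A" and hA': "hyperop A'" and sD: "csubspace D"
    and co: "\<And>j x. x \<in> D \<Longrightarrow> coord_op A j x = coord_op A' j x"
    and coD: "\<And>j x. x \<in> D \<Longrightarrow> coord_op A j x \<in> D"
begin

lemma G_one: "(\<lambda>t. 1) \<in> Gset A A' D"
  unfolding Gset_def by (auto simp: smooth_const)

lemma G_coord:
  assumes g: "g \<in> Gset A A' D"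
  shows "(\<lambda>t. complex_of_real (t $ j) * g t) \<in> Gset A A' D"
proof -
  have sg: "smooth g" using g by (simp add: Gset_def)
  have "A (\<lambda>t. complex_of_real (t $ j) * g t * \<psi> t) y = A' (\<lambda>t. complex_of_real (t $ j) * g t * \<psi>' t) y' \<and>
        A (\<lambda>t. complex_of_real (t $ j) * g t * \<psi> t) y \<in> D"
    if x: "x \<in> D" and t: "test_fun \<psi>" "test_fun \<psi>'" and xr: "x = A \<psi> y" "x = A' \<psi>' y'" for x \<psi> y \<psi>' y'
  proof -
    let ?z = "A (\<lambda>t. g t * \<psi> t) y"
    have zD: "?z \<in> D" and zz: "?z = A' (\<lambda>t. g t * \<psi>' t) y'"
      using GsetD[OF g x t xr] by blast+
    have e1: "coord_op A j ?z = A (\<lambda>t. complex_of_real (t $ j) * (g t * \<psi> t)) y"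
      by (rule coord_op_eq[OF hA test_fun_mult[OF sg t(1)]]) simp
    have e2: "coord_op A' j ?z = A' (\<lambda>t. complex_of_real (t $ j) * (g t * \<psi>' t)) y'"
      by (rule coord_op_eq[OF hA' test_fun_mult[OF sg t(2)] zz])
    show ?thesis using e1 e2 co[OF zD, of j] coD[OF zD, of j] by (simp add: mult_ac)
  qed
  moreover have "smooth (\<lambda>t. complex_of_real (t $ j) * g t)"
    by (intro smooth_mult smooth_of_real_coord sg)
  ultimately show ?thesis by (intro GsetI)
qed

lemma D_add: "x \<in> D \<Longrightarrow> y \<in> D \<Longrightarrow> x + y \<in> D"
  using sD by (simp add: csubspace_def)
lemma D_scale: "x \<in> D \<Longrightarrow> c *\<^sub>C x \<in> D"
  using sD by (simp add: csubspace_def)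

lemma G_add:
  assumes g: "g \<in> Gset A A' D" and h: "h \<in> Gset A A' D"
  shows "(\<lambda>t. g t + h t) \<in> Gset A A' D"
proof -
  have sg: "smooth g" "smooth h" using g h by (auto simp: Gset_def)
  have "A (\<lambda>t. (g t + h t) * \<psi> t) y = A' (\<lambda>t. (g t + h t) * \<psi>' t) y' \<and>
        A (\<lambda>t. (g t + h t) * \<psi> t) y \<in> D"
    if x: "x \<in> D" and t: "test_fun \<psi>" "test_fun \<psi>'" and xr: "x = A \<psi> y" "x = A' \<psi>' y'" for x \<psi> y \<psi>' y'
  proof -
    have 1: "A (\<lambda>t. (g t + h t) * \<psi> t) = A (\<lambda>t. g t * \<psi> t) + A (\<lambda>t. h t * \<psi> t)"
      using hyp_add[OF hA test_fun_mult[OF sg(1) t(1)] test_fun_mult[OF sg(2) t(1)]]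
      by (simp add: distrib_right)
    have 2: "A' (\<lambda>t. (g t + h t) * \<psi>' t) = A' (\<lambda>t. g t * \<psi>' t) + A' (\<lambda>t. h t * \<psi>' t)"
      using hyp_add[OF hA' test_fun_mult[OF sg(1) t(2)] test_fun_mult[OF sg(2) t(2)]]
      by (simp add: distrib_right)
    have "A (\<lambda>t. g t * \<psi> t) y = A' (\<lambda>t. g t * \<psi>' t) y'" "A (\<lambda>t. g t * \<psi> t) y \<in> D"
      using GsetD[OF g x t xr] by blast+
    moreover have "A (\<lambda>t. h t * \<psi> t) y = A' (\<lambda>t. h t * \<psi>' t) y'" "A (\<lambda>t. h t * \<psi> t) y \<in> D"
      using GsetD[OF h x t xr] by blast+
    ultimately show ?thesis unfolding 1 2 plus_blinfun.rep_eq using D_add by simp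
  qed
  moreover have "smooth (\<lambda>t. g t + h t)" by (intro smooth_add sg)
  ultimately show ?thesis by (intro GsetI)
qed

lemma G_cmult:
  assumes g: "g \<in> Gset A A' D"
  shows "(\<lambda>t. c * g t) \<in> Gset A A' D"
proof -
  have sg: "smooth g" using g by (auto simp: Gset_def)
  have "A (\<lambda>t. c * g t * \<psi> t) y = A' (\<lambda>t. c * g t * \<psi>' t) y' \<and>
        A (\<lambda>t. c * g t * \<psi> t) y \<in> D"
    if x: "x \<in> D" and t: "test_fun \<psi>" "test_fun \<psi>'" and xr: "x = A \<psi> y" "x = A' \<psi>' y'" for x \<psi> y \<psi>' y'
  proof -
    have 1: "A (\<lambda>t. c * g t * \<psi> t) y = c *\<^sub>C A (\<lambda>t. g t * \<psi> t) y"
      using hyp_cmult[OF hA test_fun_mult[OF sg t(1)]] by (simp add: mult.assoc)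
    have 2: "A' (\<lambda>t. c * g t * \<psi>' t) y' = c *\<^sub>C A' (\<lambda>t. g t * \<psi>' t) y'"
      using hyp_cmult[OF hA' test_fun_mult[OF sg t(2)]] by (simp add: mult.assoc)
    have "A (\<lambda>t. g t * \<psi> t) y = A' (\<lambda>t. g t * \<psi>' t) y'" "A (\<lambda>t. g t * \<psi> t) y \<in> D"
      using GsetD[OF g x t xr] by blast+
    then show ?thesis unfolding 1 2 using D_scale by simp
  qed
  moreover have "smooth (\<lambda>t. c * g t)" by (intro smooth_cmult sg)
  ultimately show ?thesis by (intro GsetI)
qed

lemma Pol_G_mult: "p \<in> Pol \<Longrightarrow> g \<in> Gset A A' D \<Longrightarrow> (\<lambda>t. p t * g t) \<in> Gset A A' D"
proof (induction p arbitrary: g rule: Pol.induct)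
  case (Pol_const c)
  then show ?case by (rule G_cmult)
next
  case (Pol_coord j)
  then show ?case by (rule G_coord)
next
  case (Pol_add p q)
  then show ?case using G_add[OF Pol_add.IH(1)[OF Pol_add.prems] Pol_add.IH(2)[OF Pol_add.prems]]
    by (simp add: distrib_right)
next
  case (Pol_mult p q)
  then show ?case using Pol_mult.IH(1)[OF Pol_mult.IH(2)[OF Pol_mult.prems]]
    by (simp add: mult.assoc)
qed

lemma Pol_G: "p \<in> Pol \<Longrightarrow> p \<in> Gset A A' D"
  using Pol_G_mult[OF _ G_one] by simp

end

lemma outside_support: "x \<notin> closure {y. f y \<noteq> 0} \<Longrightarrow> f x = 0"
  using closure_subset[of "{y. f y \<noteq> 0}"] by blast

lemma outside_supportK: "closure {y. f y \<noteq> 0} \<subseteq> K \<Longrightarrow> x \<notin> K \<Longrightarrow> f x = 0"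
  using outside_support by blast

lemma has_derivative_local_iff:
  assumes "open U" "x \<in> U" "\<And>y. y \<in> U \<Longrightarrow> f y = g y"
  shows "(f has_derivative D) (at x) \<longleftrightarrow> (g has_derivative D) (at x)"
proof
  assume "(f has_derivative D) (at x)"
  then show "(g has_derivative D) (at x)"
    by (rule has_derivative_transform_within_open[OF _ assms(1,2)]) (use assms(3) in blast)
next
  assume "(g has_derivative D) (at x)"
  then show "(f has_derivative D) (at x)"
    by (rule has_derivative_transform_within_open[OF _ assms(1,2)]) (use assms(3) in auto)
qed

lemma frechet_local:
  assumes "open U" "x \<in> U" "\<And>y. y \<in> U \<Longrightarrow> f y = g y"
  shows "frechet_derivative f (at x) = frechet_derivative g (at x)"
  unfolding frechet_derivative_def using has_derivative_local_iff[OF assms] by simp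

lemma pderivs_local:
  assumes "open U" "\<And>y. y \<in> U \<Longrightarrow> f y = g y" "x \<in> U"
  shows "pderivs is f x = pderivs is g x"
  using assms(3)
proof (induction "is" arbitrary: x)
  case Nil
  then show ?case using assms by simp
next
  case (Cons i "is")
  have "frechet_derivative (pderivs is f) (at x) = frechet_derivative (pderivs is g) (at x)"
    by (rule frechet_local[OF assms(1) Cons.prems]) (rule Cons.IH)
  then show ?case by simp
qed

lemma pderivs_zero: "pderivs is (\<lambda>x. 0) = (\<lambda>x. 0)"
  by (induction "is") auto

lemma pderivs_outside:
  assumes "x \<notin> closure {y. f y \<noteq> 0}"
  shows "pderivs is f x = 0"
proof -
  let ?U = "- closure {y. f y \<noteq> 0}"
  have U: "open ?U" by (rule open_Compl) (rule closed_closure)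
  have xU: "x \<in> ?U" using assms by blast
  have eq: "f y = 0" if "y \<in> ?U" for y
    using that outside_support by blast
  have "pderivs is f x = pderivs is (\<lambda>x. 0) x"
    by (rule pderivs_local[OF U eq xU])
  then show ?thesis by (simp add: pderivs_zero)
qed

lemma pd_outside: "x \<notin> closure {y. f y \<noteq> 0} \<Longrightarrow> pd i f x = 0"
  using pderivs_outside[of x f "[i]"] by (simp add: pd_def)

lemma support_pd_subset: "closure {x. pd i f x \<noteq> 0} \<subseteq> closure {x. f x \<noteq> 0}"
proof -
  have "{x. pd i f x \<noteq> 0} \<subseteq> closure {x. f x \<noteq> 0}" using pd_outside by blast
  then show ?thesis by (simp add: closure_minimal)
qed

lemma pd_mult:
  fixes f g :: "'a::euclidean_space \<Rightarrow> complex"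
  assumes "smooth f" "smooth g"
  shows "pd i (\<lambda>x. f x * g x) = (\<lambda>x. pd i f x * g x + f x * pd i g x)"
proof
  fix x
  have "((\<lambda>x. f x * g x) has_derivative (\<lambda>h. f x * frechet_derivative g (at x) h + frechet_derivative f (at x) h * g x)) (at x)"
    using assms by (intro has_derivative_mult) (auto simp: smooth_has_derivative)
  then have "frechet_derivative (\<lambda>x. f x * g x) (at x) = (\<lambda>h. f x * frechet_derivative g (at x) h + frechet_derivative f (at x) h * g x)"
    by (rule frechet_derivative_at[symmetric])
  then show "pd i (\<lambda>x. f x * g x) x = pd i f x * g x + f x * pd i g x"
    unfolding pd_def by (simp add: add.commute)
qed

lemma pd_add_fun:
  assumes "smooth f" "smooth g"
  shows "pd i (\<lambda>x. f x + g x) = (\<lambda>x. pd i f x + pd i g x)"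
  using pd_add assms smooth_diff by blast

lemma pd_diff_fun:
  fixes f g :: "'a::euclidean_space \<Rightarrow> 'b::real_normed_vector"
  assumes "smooth f" "smooth g"
  shows "pd i (\<lambda>x. f x - g x) = (\<lambda>x. pd i f x - pd i g x)"
proof
  fix x
  have "((\<lambda>x. f x - g x) has_derivative (\<lambda>h. frechet_derivative f (at x) h - frechet_derivative g (at x) h)) (at x)"
    using assms by (intro has_derivative_diff) (auto simp: smooth_has_derivative)
  then show "pd i (\<lambda>x. f x - g x) x = pd i f x - pd i g x"
    unfolding pd_def by (metis (no_types, lifting) frechet_derivative_at)
qed

lemma pderivs_add:
  assumes "smooth f" "smooth g" "set is \<subseteq> Basis"
  shows "pderivs is (\<lambda>x. f x + g x) = (\<lambda>x. pderivs is f x + pderivs is g x)"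
  using assms(3)
proof (induction "is")
  case Nil
  then show ?case by simp
next
  case (Cons i "is")
  then have "pderivs (i # is) (\<lambda>x. f x + g x) = pd i (\<lambda>x. pderivs is f x + pderivs is g x)"
    by (simp add: pderivs_Cons del: pderivs.simps)
  also have "\<dots> = (\<lambda>x. pd i (pderivs is f) x + pd i (pderivs is g) x)"
    using Cons.prems by (intro pd_add_fun smooth_pderivs assms) auto
  finally show ?case by (simp add: pderivs_Cons del: pderivs.simps)
qed

lemma pderivs_diff:
  fixes f g :: "'a::euclidean_space \<Rightarrow> 'b::real_normed_vector"
  assumes "smooth f" "smooth g" "set is \<subseteq> Basis"
  shows "pderivs is (\<lambda>x. f x - g x) = (\<lambda>x. pderivs is f x - pderivs is g x)"
  using assms(3)
proof (induction "is")
  case Nil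
  then show ?case by simp
next
  case (Cons i "is")
  then have "pderivs (i # is) (\<lambda>x. f x - g x) = pd i (\<lambda>x. pderivs is f x - pderivs is g x)"
    by (simp add: pderivs_Cons del: pderivs.simps)
  also have "\<dots> = (\<lambda>x. pd i (pderivs is f) x - pd i (pderivs is g) x)"
    using Cons.prems by (intro pd_diff_fun smooth_pderivs assms) auto
  finally show ?case by (simp add: pderivs_Cons del: pderivs.simps)
qed

definition unif0 :: "'a set \<Rightarrow> (nat \<Rightarrow> 'a \<Rightarrow> complex) \<Rightarrow> bool" where
  "unif0 K F \<longleftrightarrow> (\<forall>e>0. eventually (\<lambda>k. \<forall>x\<in>K. norm (F k x) < e) sequentially)"

lemma unif0_add:
  assumes "unif0 K F" "unif0 K G"
  shows "unif0 K (\<lambda>k x. F k x + G k x)"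
  unfolding unif0_def
proof (intro allI impI)
  fix e :: real assume e: "e > 0"
  have "eventually (\<lambda>k. \<forall>x\<in>K. norm (F k x) < e/2) sequentially"
       "eventually (\<lambda>k. \<forall>x\<in>K. norm (G k x) < e/2) sequentially"
    using assms e unfolding unif0_def by (meson half_gt_zero)+
  then show "eventually (\<lambda>k. \<forall>x\<in>K. norm (F k x + G k x) < e) sequentially"
  proof eventually_elim
    case (elim k)
    show ?case
    proof
      fix x assume "x \<in> K"
      then have "norm (F k x) < e/2" "norm (G k x) < e/2" using elim by auto
      then show "norm (F k x + G k x) < e" by (intro norm_triangle_lt) simp
    qed
  qed
qed

lemma support_bounded_norm:
  fixes \<psi> :: "'a::euclidean_space \<Rightarrow> complex"
  assumes "smooth \<psi>" "compact K" "closure {x. \<psi> x \<noteq> 0} \<subseteq> K"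
  shows "\<exists>M>0. \<forall>x. norm (\<psi> x) \<le> M"
proof -
  have "compact (\<psi> ` K)" using assms by (intro compact_continuous_image smooth_cont)
  then obtain M0 where M0: "\<forall>y\<in>\<psi> ` K. norm y \<le> M0"
    using compact_imp_bounded[OF \<open>compact (\<psi> ` K)\<close>] unfolding bounded_iff by blast
  have "norm (\<psi> x) \<le> \<bar>M0\<bar> + 1" for x
  proof (cases "x \<in> K")
    case True then show ?thesis using M0 by fastforce
  next
    case False
    then have "\<psi> x = 0" by (rule outside_supportK[OF assms(3)])
    then show ?thesis by simp
  qed
  then show ?thesis by (intro exI[of _ "\<bar>M0\<bar> + 1"]) auto
qed

lemma prod_conv:
  fixes h :: "nat \<Rightarrow> 'a::euclidean_space \<Rightarrow> complex"
  assumes "compact K" "set is \<subseteq> Basis"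
    and "\<forall>k. smooth (h k)"
    and "\<forall>js. set js \<subseteq> Basis \<longrightarrow> unif0 K (\<lambda>k. pderivs js (h k))"
    and "smooth \<psi>" "closure {x. \<psi> x \<noteq> 0} \<subseteq> K"
  shows "unif0 UNIV (\<lambda>k. pderivs is (\<lambda>x. h k x * \<psi> x))"
  using assms(2-)
proof (induction "is" arbitrary: h \<psi> rule: rev_induct)
  case Nil
  obtain M where M: "M > 0" "\<And>x. norm (\<psi> x) \<le> M"
    using support_bounded_norm[OF Nil(4) assms(1) Nil(5)] by blast
  show ?case unfolding unif0_def
  proof (intro allI impI)
    fix e :: real assume e: "e > 0"
    have u: "unif0 K h" using Nil(3)[rule_format, of "[]"] by simp
    have "e / M > 0" using e M by simp
    then have "eventually (\<lambda>k. \<forall>x\<in>K. norm (h k x) < e / M) sequentially"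
      using u unfolding unif0_def by blast
    then show "eventually (\<lambda>k. \<forall>x\<in>UNIV. norm (pderivs [] (\<lambda>x. h k x * \<psi> x) x) < e) sequentially"
    proof eventually_elim
      case (elim k)
      show ?case
      proof
        fix x :: 'a
        show "norm (pderivs [] (\<lambda>x. h k x * \<psi> x) x) < e"
        proof (cases "x \<in> K")
          case True
          then have "norm (h k x) < e / M" using elim by auto
          have "norm (h k x) * norm (\<psi> x) \<le> norm (h k x) * M" by (rule mult_left_mono[OF M(2)]) simp
          also have "\<dots> < e / M * M" by (rule mult_strict_right_mono) fact+
          finally have "norm (h k x) * norm (\<psi> x) < e / M * M" .
          then show ?thesis using M by (simp add: norm_mult)
        next
          case False
          then have "\<psi> x = 0" by (rule outside_supportK[OF Nil(5)])
          then show ?thesis using e by simp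
        qed
      qed
    qed
  qed
next
  case (snoc i "is")
  have i: "i \<in> Basis" and isB: "set is \<subseteq> Basis" using snoc.prems(1) by auto
  have sh: "smooth (h k)" for k using snoc.prems(2) by blast
  have eq: "pderivs (is @ [i]) (\<lambda>x. h k x * \<psi> x) =
     (\<lambda>x. pderivs is (\<lambda>x. pd i (h k) x * \<psi> x) x + pderivs is (\<lambda>x. h k x * pd i \<psi> x) x)" for k
  proof -
    have "pderivs (is @ [i]) (\<lambda>x. h k x * \<psi> x) = pderivs is (\<lambda>x. pd i (h k) x * \<psi> x + h k x * pd i \<psi> x)"
      by (simp add: pderivs_snoc pd_mult[OF sh snoc.prems(4)])
    also have "\<dots> = (\<lambda>x. pderivs is (\<lambda>x. pd i (h k) x * \<psi> x) x + pderivs is (\<lambda>x. h k x * pd i \<psi> x) x)"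
      by (intro pderivs_add smooth_mult smooth_pd sh snoc.prems(4) i isB)
    finally show ?thesis .
  qed
  have 1: "unif0 UNIV (\<lambda>k. pderivs is (\<lambda>x. pd i (h k) x * \<psi> x))"
  proof (rule snoc.IH[OF isB])
    show "\<forall>k. smooth (pd i (h k))" using sh i smooth_pd by blast
    show "\<forall>js. set js \<subseteq> Basis \<longrightarrow> unif0 K (\<lambda>k. pderivs js (pd i (h k)))"
    proof (intro allI impI)
      fix js :: "'a list" assume "set js \<subseteq> Basis"
      then have "set (js @ [i]) \<subseteq> Basis" using i by simp
      then have "unif0 K (\<lambda>k. pderivs (js @ [i]) (h k))" using snoc.prems(3) by blast
      then show "unif0 K (\<lambda>k. pderivs js (pd i (h k)))" by (simp add: pderivs_snoc)
    qed
  qed (use snoc.prems in auto)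
  have 2: "unif0 UNIV (\<lambda>k. pderivs is (\<lambda>x. h k x * pd i \<psi> x))"
  proof (rule snoc.IH[OF isB])
    show "smooth (pd i \<psi>)" using snoc.prems(4) i smooth_pd by blast
    show "closure {x. pd i \<psi> x \<noteq> 0} \<subseteq> K" using support_pd_subset snoc.prems(5) by blast
  qed (use snoc.prems in auto)
  show ?case using unif0_add[OF 1 2] by (simp add: eq)
qed

definition convC :: "(real^'n) set \<Rightarrow> (real^'n \<Rightarrow> real) \<Rightarrow> (real^'n \<Rightarrow> complex) \<Rightarrow> real^'n \<Rightarrow> complex" where
  "convC C L f x = integral C (\<lambda>z. complex_of_real (L z) * f (x - z))"

lemma smooth_pd_cont_comp:
  assumes "smooth f" "i \<in> Basis" "continuous_on S g"
  shows "continuous_on S (\<lambda>x. pd i f (g x))"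
  using continuous_on_compose2[OF smooth_pd_cont[OF assms(1,2), of UNIV] assms(3)] by auto

lemma conv_has_derivative:
  fixes L :: "real^'n \<Rightarrow> real"
  assumes L: "continuous_on UNIV L" and f: "smooth f"
  shows "(convC (cbox a b) L f has_derivative
     (\<lambda>h. integral (cbox a b) (\<lambda>z. complex_of_real (L z) * frechet_derivative f (at (x - z)) h))) (at x)"
proof -
  define fx where "fx x t = L t *\<^sub>R Blinfun (frechet_derivative f (at (x - t)))" for x t :: "real^'n"
  have bl: "bounded_linear (frechet_derivative f (at y))" for y
    using f smooth_has_derivative has_derivative_bounded_linear by blast
  have fxa: "blinfun_apply (fx x t) h = complex_of_real (L t) * frechet_derivative f (at (x - t)) h" for x t h
    by (simp add: fx_def scaleR_blinfun.rep_eq bounded_linear_Blinfun_apply[OF bl] scaleR_conv_of_real)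
  have fxai: "blinfun_apply (fx x t) i = complex_of_real (L t) * pd i f (x - t)" for x t i
    by (simp add: fxa pd_def)
  have der: "((\<lambda>x. complex_of_real (L t) * f (x - t)) has_derivative blinfun_apply (fx x t)) (at x within UNIV)" for x t
  proof -
    have 1: "((\<lambda>x. x - t) has_derivative (\<lambda>h. h)) (at x)"
      by (intro derivative_eq_intros) auto
    have 2: "((\<lambda>x. f (x - t)) has_derivative frechet_derivative f (at (x - t))) (at x)"
      using has_derivative_compose[OF 1 smooth_has_derivative[OF f]] by simp
    have "((\<lambda>x. complex_of_real (L t) * f (x - t)) has_derivative (\<lambda>h. complex_of_real (L t) * frechet_derivative f (at (x - t)) h)) (at x)"
      by (rule has_derivative_mult_right[OF 2])
    then show ?thesis by (simp add: fxa[abs_def])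
  qed
  have cf: "continuous_on UNIV f" using f smooth_cont by blast
  have int: "(\<lambda>t. complex_of_real (L t) * f (x - t)) integrable_on cbox a b" for x
    by (intro integrable_continuous continuous_intros continuous_on_compose2[OF cf] continuous_on_subset[OF L]) auto
  have cont: "continuous_on (UNIV \<times> cbox a b) (\<lambda>(x, t). fx x t)"
  proof (rule continuous_on_blinfun_componentwise)
    fix i :: "real^'n" assume i: "i \<in> Basis"
    have "continuous_on (UNIV \<times> cbox a b) (\<lambda>p. complex_of_real (L (snd p)) * pd i f (fst p - snd p))"
      by (intro continuous_intros continuous_on_compose2[OF L] smooth_pd_cont_comp[OF f i]) auto
    then show "continuous_on (UNIV \<times> cbox a b) (\<lambda>p. blinfun_apply (case p of (x, t) \<Rightarrow> fx x t) i)"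
      by (simp add: split_beta fxai)
  qed
  have "((\<lambda>x. integral (cbox a b) (\<lambda>t. complex_of_real (L t) * f (x - t))) has_derivative
      blinfun_apply (integral (cbox a b) (fx x))) (at x within UNIV)"
    by (rule leibniz_rule[OF der int cont]) auto
  moreover have "blinfun_apply (integral (cbox a b) (fx x)) h = integral (cbox a b) (\<lambda>z. complex_of_real (L z) * frechet_derivative f (at (x - z)) h)" for h
  proof -
    have "continuous_on (cbox a b) (\<lambda>t. (\<lambda>(x, t). fx x t) (x, t))"
      by (rule continuous_on_compose2[OF cont]) (auto intro!: continuous_intros)
    then have "fx x integrable_on cbox a b"
      by (intro integrable_continuous) simp
    then show ?thesis by (simp add: blinfun_apply_integral fxa)
  qed
  ultimately show ?thesis unfolding convC_def[abs_def]
    by (metis (no_types, lifting) ext)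
qed

lemma conv_pd:
  fixes L :: "real^'n \<Rightarrow> real"
  assumes L: "continuous_on UNIV L" and f: "smooth f"
  shows "pd i (convC (cbox a b) L f) = convC (cbox a b) L (pd i f)"
    "convC (cbox a b) L f differentiable (at x)"
proof -
  show "pd i (convC (cbox a b) L f) = convC (cbox a b) L (pd i f)"
  proof
    fix x
    have "frechet_derivative (convC (cbox a b) L f) (at x) = (\<lambda>h. integral (cbox a b) (\<lambda>z. complex_of_real (L z) * frechet_derivative f (at (x - z)) h))"
      by (rule frechet_derivative_at[symmetric, OF conv_has_derivative[OF L f]])
    then show "pd i (convC (cbox a b) L f) x = convC (cbox a b) L (pd i f) x"
      by (simp add: pd_def convC_def)
  qed
  show "convC (cbox a b) L f differentiable (at x)"
    using conv_has_derivative[OF L f] differentiable_def by blast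
qed

lemma conv_pderivs:
  fixes L :: "real^'n \<Rightarrow> real"
  assumes L: "continuous_on UNIV L" and f: "smooth f" and "set is \<subseteq> Basis"
  shows "pderivs is (convC (cbox a b) L f) = convC (cbox a b) L (pderivs is f)"
  using assms(3)
proof (induction "is")
  case Nil
  then show ?case by simp
next
  case (Cons i "is")
  then have "pderivs (i # is) (convC (cbox a b) L f) = pd i (convC (cbox a b) L (pderivs is f))"
    by (simp add: pderivs_Cons del: pderivs.simps)
  also have "\<dots> = convC (cbox a b) L (pd i (pderivs is f))"
    using Cons.prems by (intro conv_pd L smooth_pderivs f) auto
  finally show ?case by (simp add: pderivs_Cons del: pderivs.simps)
qed

definition SL :: "((real^'n \<Rightarrow> complex) \<times> (real^'n \<Rightarrow> complex)) list \<Rightarrow> real^'n \<Rightarrow> real^'n \<Rightarrow> complex" where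
  "SL ls x y = sum_list (map (\<lambda>p. fst p x * snd p y) ls)"

definition Sep :: "(real^'n \<Rightarrow> real^'n \<Rightarrow> complex) set" where
  "Sep = {S. \<exists>ls. (\<forall>p\<in>set ls. fst p \<in> Pol \<and> continuous_on UNIV (snd p)) \<and> S = SL ls}"

lemma SepI: "(\<forall>p\<in>set ls. fst p \<in> Pol \<and> continuous_on UNIV (snd p)) \<Longrightarrow> SL ls \<in> Sep"
  unfolding Sep_def by blast

lemma Sep_const: "(\<lambda>x y. c) \<in> (Sep :: (real^'n \<Rightarrow> real^'n \<Rightarrow> complex) set)"
proof -
  have "SL [(\<lambda>x::real^'n. c, \<lambda>y. 1)] = (\<lambda>x y. c)" by (intro ext) (simp add: SL_def)
  moreover have "SL [(\<lambda>x::real^'n. c, \<lambda>y. 1)] \<in> Sep" by (rule SepI) (auto intro: Pol_const)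
  ultimately show ?thesis by simp
qed

lemma Sep_x: "(\<lambda>x y. complex_of_real (x $ j)) \<in> (Sep :: (real^'n \<Rightarrow> real^'n \<Rightarrow> complex) set)"
proof -
  have "SL [(\<lambda>x::real^'n. complex_of_real (x $ j), \<lambda>y. 1)] = (\<lambda>x y. complex_of_real (x $ j))" by (intro ext) (simp add: SL_def)
  moreover have "SL [(\<lambda>x::real^'n. complex_of_real (x $ j), \<lambda>y. 1)] \<in> Sep" by (rule SepI) (auto intro: Pol_coord)
  ultimately show ?thesis by simp
qed

lemma Sep_y: "(\<lambda>x y. complex_of_real (y $ j)) \<in> (Sep :: (real^'n \<Rightarrow> real^'n \<Rightarrow> complex) set)"
proof -
  have "SL [(\<lambda>x::real^'n. 1, \<lambda>y. complex_of_real (y $ j))] = (\<lambda>x y. complex_of_real (y $ j))" by (intro ext) (simp add: SL_def)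
  moreover have "SL [(\<lambda>x::real^'n. 1, \<lambda>y. complex_of_real (y $ j))] \<in> Sep"
    by (rule SepI) (auto intro!: continuous_intros intro: Pol_const)
  ultimately show ?thesis by simp
qed

lemma Sep_add: "S \<in> Sep \<Longrightarrow> T \<in> Sep \<Longrightarrow> (\<lambda>x y. S x y + T x y) \<in> Sep"
proof -
  assume "S \<in> Sep" "T \<in> Sep"
  then obtain l1 l2 where l: "\<forall>p\<in>set l1. fst p \<in> Pol \<and> continuous_on UNIV (snd p)" "S = SL l1"
     "\<forall>p\<in>set l2. fst p \<in> Pol \<and> continuous_on UNIV (snd p)" "T = SL l2" unfolding Sep_def by blast
  have "SL (l1 @ l2) = (\<lambda>x y. S x y + T x y)" by (intro ext) (simp add: l SL_def)
  moreover have "SL (l1 @ l2) \<in> Sep" using l by (intro SepI) auto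
  ultimately show ?thesis by simp
qed

lemma sum_list_prod_concat:
  "sum_list (map f l1) * sum_list (map g l2) = sum_list (concat (map (\<lambda>p. map (\<lambda>q. f p * g q) l2) l1))"
  for f :: "'a \<Rightarrow> 'c::comm_ring"
  by (induction l1) (auto simp: distrib_right sum_list_const_mult)

lemma Sep_mult: "S \<in> Sep \<Longrightarrow> T \<in> Sep \<Longrightarrow> (\<lambda>x y. S x y * T x y) \<in> Sep"
proof -
  assume "S \<in> Sep" "T \<in> Sep"
  then obtain l1 l2 where l: "\<forall>p\<in>set l1. fst p \<in> Pol \<and> continuous_on UNIV (snd p)" "S = SL l1"
     "\<forall>p\<in>set l2. fst p \<in> Pol \<and> continuous_on UNIV (snd p)" "T = SL l2" unfolding Sep_def by blast
  define l3 where "l3 = concat (map (\<lambda>p. map (\<lambda>q. (\<lambda>x. fst p x * fst q x, \<lambda>y. snd p y * snd q y)) l2) l1)"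
  have "SL l3 x y = S x y * T x y" for x y
    unfolding l l3_def SL_def sum_list_prod_concat
    by (simp add: map_concat o_def mult_ac)
  then have "SL l3 = (\<lambda>x y. S x y * T x y)" by blast
  moreover have "SL l3 \<in> Sep" using l unfolding l3_def
    by (intro SepI) (auto intro!: Pol_mult continuous_intros)
  ultimately show ?thesis by simp
qed

lemma Sep_pow: "S \<in> Sep \<Longrightarrow> (\<lambda>x y. S x y ^ k) \<in> Sep"
  by (induction k) (auto intro: Sep_const Sep_mult)

lemma Sep_sum: "finite A \<Longrightarrow> (\<And>j. j \<in> A \<Longrightarrow> F j \<in> Sep) \<Longrightarrow> (\<lambda>x y. \<Sum>j\<in>A. F j x y) \<in> Sep"
  by (induction A rule: finite_induct) (auto intro: Sep_const Sep_add)

lemma SL_integral: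
  assumes "\<forall>p\<in>set ls. continuous_on UNIV (snd p)" "continuous_on UNIV \<phi>"
  shows "((\<lambda>y. SL ls x y * \<phi> y) has_integral
     sum_list (map (\<lambda>p. fst p x * integral (cbox a b) (\<lambda>y. snd p y * \<phi> y)) ls)) (cbox a b)"
  using assms(1)
proof (induction ls)
  case Nil
  then show ?case by (simp add: SL_def)
next
  case (Cons p ls)
  have i: "(\<lambda>y. snd p y * \<phi> y) integrable_on cbox a b"
    using Cons.prems assms(2) by (intro integrable_continuous continuous_intros) (auto intro: continuous_on_subset)
  have "((\<lambda>y. fst p x * (snd p y * \<phi> y) + SL ls x y * \<phi> y) has_integral
     fst p x * integral (cbox a b) (\<lambda>y. snd p y * \<phi> y) + sum_list (map (\<lambda>p. fst p x * integral (cbox a b) (\<lambda>y. snd p y * \<phi> y)) ls)) (cbox a b)"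
    using Cons by (intro has_integral_add has_integral_mult_right integrable_integral i) auto
  then show ?case by (simp add: SL_def distrib_right distrib_left mult_ac)
qed

lemma Pol_sum_list: "(\<forall>p\<in>set ls. fst p \<in> Pol) \<Longrightarrow> (\<lambda>x. sum_list (map (\<lambda>p. fst p x * c p) ls)) \<in> Pol"
  by (induction ls) (auto intro!: Pol_add Pol_mult Pol_const[of 0, simplified] Pol_const)

lemma Sep_integral_Pol:
  assumes "S \<in> Sep" "continuous_on UNIV \<phi>"
  shows "(\<lambda>x. integral (cbox a b) (\<lambda>y. S x y * \<phi> y)) \<in> Pol"
proof -
  obtain ls where l: "\<forall>p\<in>set ls. fst p \<in> Pol \<and> continuous_on UNIV (snd p)" "S = SL ls"
    using assms(1) unfolding Sep_def by blast
  have "(\<lambda>x. integral (cbox a b) (\<lambda>y. S x y * \<phi> y)) =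
     (\<lambda>x. sum_list (map (\<lambda>p. fst p x * integral (cbox a b) (\<lambda>y. snd p y * \<phi> y)) ls))"
    using SL_integral[of ls \<phi>] l assms(2) integral_unique by fastforce
  moreover have "(\<lambda>x. sum_list (map (\<lambda>p. fst p x * integral (cbox a b) (\<lambda>y. snd p y * \<phi> y)) ls)) \<in> Pol"
    using Pol_sum_list[of ls "\<lambda>p. integral (cbox a b) (\<lambda>y. snd p y * \<phi> y)"] l(1) by blast
  ultimately show ?thesis by simp
qed

lemma norm_sq_vec: "norm (z :: real^'n) ^ 2 = (\<Sum>j\<in>UNIV. (z $ j) ^ 2)"
  by (subst power2_norm_eq_inner) (simp add: inner_vec_def power2_eq_square)

lemma kernel_Sep:
  "(\<lambda>x y. complex_of_real (c * (1 - norm (x - y) ^ 2 / R2) ^ k)) \<in> (Sep :: (real^'n \<Rightarrow> real^'n \<Rightarrow> complex) set)"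
proof -
  have "(\<lambda>x y::real^'n. complex_of_real c * (1 + complex_of_real (- 1 / R2) *
      (\<Sum>j\<in>UNIV. (complex_of_real (x $ j) + (-1) * complex_of_real (y $ j)) ^ 2)) ^ k) \<in> Sep"
    by (intro Sep_mult Sep_const Sep_pow Sep_add Sep_sum Sep_x Sep_y) auto
  moreover have "(\<lambda>x y::real^'n. complex_of_real c * (1 + complex_of_real (- 1 / R2) *
      (\<Sum>j\<in>UNIV. (complex_of_real (x $ j) + (-1) * complex_of_real (y $ j)) ^ 2)) ^ k) =
      (\<lambda>x y. complex_of_real (c * (1 - norm (x - y) ^ 2 / R2) ^ k))"
    by (intro ext) (simp add: norm_sq_vec diff_divide_distrib)
  ultimately show ?thesis by simp
qed

lemma conv_change:
  fixes \<phi> :: "real^'n \<Rightarrow> complex" and L :: "real^'n \<Rightarrow> real"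
  assumes cp: "continuous_on UNIV \<phi>" and cL: "continuous_on UNIV L"
    and supp: "\<And>y. y \<notin> cbox a b \<Longrightarrow> \<phi> y = 0"
    and sub: "\<And>y. y \<in> cbox a b \<Longrightarrow> x - y \<in> cbox a' b'"
  shows "convC (cbox a' b') L \<phi> x = integral (cbox a b) (\<lambda>y. complex_of_real (L (x - y)) * \<phi> y)"
proof -
  define F where "F y = complex_of_real (L (x - y)) * \<phi> y" for y
  define I where "I = integral (cbox a b) F"
  have hI: "(F has_integral I) (cbox a b)" unfolding I_def F_def
    by (intro integrable_integral integrable_continuous continuous_intros continuous_on_compose2[OF cL]
        continuous_on_subset[OF cp]) auto
  have h: "((\<lambda>z. F ((-1) *\<^sub>R z + x)) has_integral (1 / \<bar>-1\<bar> ^ DIM(real^'n)) *\<^sub>R I)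
      ((\<lambda>z. (1 / -1) *\<^sub>R z + - ((1 / -1) *\<^sub>R x)) ` cbox a b)"
    by (rule has_integral_affinity[OF hI]) simp
  have e1: "(\<lambda>z. F ((-1) *\<^sub>R z + x)) = (\<lambda>z. complex_of_real (L z) * \<phi> (x - z))"
    by (simp add: F_def algebra_simps)
  have e2: "(\<lambda>z. (1 / -1) *\<^sub>R z + - ((1 / -1) *\<^sub>R x)) ` cbox a b = (\<lambda>z. x - z) ` cbox a b"
    by (simp add: algebra_simps)
  have h2: "((\<lambda>z. complex_of_real (L z) * \<phi> (x - z)) has_integral I) ((\<lambda>z. x - z) ` cbox a b)"
    using h unfolding e1 e2 by simp
  have h3: "((\<lambda>z. complex_of_real (L z) * \<phi> (x - z)) has_integral I) (cbox a' b')"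
  proof (rule has_integral_on_superset[OF h2])
    fix z assume z: "z \<notin> (\<lambda>z. x - z) ` cbox a b"
    have "x - z \<notin> cbox a b"
    proof
      assume "x - z \<in> cbox a b"
      then have "x - (x - z) \<in> (\<lambda>z. x - z) ` cbox a b" by (rule imageI)
      then show False using z by simp
    qed
    then show "complex_of_real (L z) * \<phi> (x - z) = 0" using supp by simp
  next
    show "(\<lambda>z. x - z) ` cbox a b \<subseteq> cbox a' b'" using sub by blast
  qed
  then show ?thesis unfolding convC_def I_def F_def by (rule integral_unique)
qed

definition Lam :: "real \<Rightarrow> nat \<Rightarrow> real^'n \<Rightarrow> real" where
  "Lam R2 k z = (1 - norm z ^ 2 / R2) ^ k"

definition Cb :: "real \<Rightarrow> (real^'n) set" where
  "Cb r = cbox (- (\<chi> j. r)) (\<chi> j. r)"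

definition Kc :: "real \<Rightarrow> real \<Rightarrow> nat \<Rightarrow> real^'n \<Rightarrow> real" where
  "Kc r R2 k z = Lam R2 k z / integral (Cb (2*r) :: (real^'n) set) (Lam R2 k)"

lemma Cb_mem: "z \<in> Cb r \<longleftrightarrow> (\<forall>j. \<bar>z $ j\<bar> \<le> r)"
  unfolding Cb_def mem_box_cart by (auto simp: abs_le_iff) (metis minus_le_iff)+

lemma Lam_cont: "continuous_on S (Lam R2 k)"
  unfolding Lam_def[abs_def] divide_inverse by (intro continuous_intros)

lemma normsq_Cb: "z \<in> Cb s \<Longrightarrow> norm z ^ 2 \<le> real CARD('n) * s^2" for z :: "real^'n"
proof -
  assume z: "z \<in> Cb s"
  have "norm z ^ 2 = (\<Sum>j\<in>UNIV. (z $ j)^2)" by (rule norm_sq_vec)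
  also have "\<dots> \<le> (\<Sum>j\<in>(UNIV::'n set). s^2)"
  proof (rule sum_mono)
    fix j :: 'n
    have "\<bar>z $ j\<bar> \<le> s" using z Cb_mem by blast
    then have "\<bar>z $ j\<bar>^2 \<le> s^2" by (meson abs_ge_zero order_trans power_mono)
    then show "(z $ j)^2 \<le> s^2" by simp
  qed
  finally show ?thesis by simp
qed

context
  fixes r R2 :: real
  assumes r: "r > 0" and R2: "R2 > 4 * r^2 * real CARD('n::finite)"
begin

lemma R2_pos: "R2 > 0"
  using R2 r by (smt (verit) mult_nonneg_nonneg of_nat_0_le_iff zero_le_power2)

lemma Lam_bounds:
  assumes "z \<in> Cb (2*r)"
  shows "0 \<le> 1 - norm (z::real^'n) ^ 2 / R2" "1 - norm z ^ 2 / R2 \<le> 1"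
proof -
  have "norm z ^ 2 \<le> real CARD('n) * (2*r)^2" using normsq_Cb assms by blast
  also have "\<dots> < R2" using R2 by (simp add: power2_eq_square mult_ac)
  finally show "0 \<le> 1 - norm z ^ 2 / R2" using R2_pos by simp
  show "1 - norm z ^ 2 / R2 \<le> 1" using R2_pos by simp
qed

lemma Lam_nonneg: "z \<in> Cb (2*r) \<Longrightarrow> 0 \<le> Lam R2 k (z::real^'n)"
  unfolding Lam_def using Lam_bounds by simp

lemma Lam_far:
  assumes z: "z \<in> Cb (2*r)" and d: "\<delta> \<le> norm (z::real^'n)" "0 \<le> \<delta>"
  shows "Lam R2 k z \<le> (1 - \<delta>^2 / R2) ^ k"
  unfolding Lam_def
proof (rule power_mono)
  show "0 \<le> 1 - norm z ^ 2 / R2" using Lam_bounds z by blast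
  have "\<delta>^2 \<le> norm z ^ 2" using d by (simp add: power_mono)
  then show "1 - norm z ^ 2 / R2 \<le> 1 - \<delta>^2 / R2" using R2_pos by (simp add: divide_right_mono)
qed

lemma Lam_near:
  assumes z: "z \<in> Cb s" and s: "real CARD('n) * s^2 \<le> \<delta>^2 / 2" and d: "\<delta>^2 / 2 < R2"
  shows "(1 - \<delta>^2 / (2 * R2)) ^ k \<le> Lam R2 k (z::real^'n)"
  unfolding Lam_def
proof (rule power_mono)
  have "norm z ^ 2 \<le> \<delta>^2 / 2" using normsq_Cb[OF z] s by linarith
  then have "norm z ^ 2 / R2 \<le> (\<delta>^2 / 2) / R2" using R2_pos by (intro divide_right_mono) auto
  then show "1 - \<delta>^2 / (2 * R2) \<le> 1 - norm z ^ 2 / R2" by (simp add: mult.commute)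
  have "(\<delta>^2 / 2) / R2 < 1" using d R2_pos by simp
  then show "0 \<le> 1 - \<delta>^2 / (2 * R2)" by simp
qed

lemma Lam_int: "(Lam R2 k) integrable_on Cb t"
  unfolding Cb_def by (rule integrable_continuous) (rule Lam_cont)

lemma content_Cb: "t \<ge> 0 \<Longrightarrow> Henstock_Kurzweil_Integration.content (Cb t :: (real^'n) set) = (2*t) ^ CARD('n)"
proof -
  assume t: "t \<ge> 0"
  have ne: "Cb t \<noteq> ({} :: (real^'n) set)" using t Cb_mem[of 0 t] by auto
  then show ?thesis unfolding Cb_def using content_cbox_cart[of "- (\<chi> j. t)" "(\<chi> j. t) :: real^'n"]
    by (simp add: Cb_def)
qed

lemma Lam_integral_lower:
  assumes d: "0 < \<delta>" "\<delta> \<le> 2 * r"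
  shows "(1 - \<delta>^2 / (2 * R2)) ^ k * (2 * (\<delta> / sqrt (2 * real CARD('n)))) ^ CARD('n)
         \<le> integral (Cb (2*r)) (Lam R2 k :: real^'n \<Rightarrow> real)"
proof -
  define s where "s = \<delta> / sqrt (2 * real CARD('n))"
  have cpos: "real CARD('n) > 0" by simp
  have c1: "1 \<le> real CARD('n)"
  proof -
    have "0 < CARD('n)" by simp
    then show ?thesis by (metis One_nat_def Suc_leI of_nat_1 of_nat_le_iff)
  qed
  have s0: "0 \<le> s" using d by (simp add: s_def)
  have ss: "real CARD('n) * s^2 = \<delta>^2 / 2"
    using cpos by (simp add: s_def power_divide)
  have sle: "s \<le> \<delta>"
  proof -
    have c0: "0 < CARD('n)" by simp
    then have "1 \<le> real CARD('n)" by (metis One_nat_def Suc_leI of_nat_1 of_nat_le_iff)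
    then have "1 \<le> 2 * real CARD('n)" by linarith
    then have "1 \<le> sqrt (2 * real CARD('n))" by simp
    then show ?thesis unfolding s_def using d by (simp add: divide_le_eq mult_le_cancel_left1)
  qed
  have d2: "\<delta>^2 / 2 < R2"
  proof -
    have "\<delta>^2 \<le> (2*r)^2" using d by (intro power_mono) auto
    also have "\<dots> = 4 * r^2 * 1" by (simp add: power2_eq_square)
    also have "\<dots> \<le> 4 * r^2 * real CARD('n)" using c1 by (intro mult_left_mono) auto
    finally show ?thesis using R2 R2_pos by simp
  qed
  have sub: "Cb s \<subseteq> (Cb (2*r) :: (real^'n) set)" using sle d by (auto simp: Cb_mem) (metis order_trans)
  have "(1 - \<delta>^2 / (2 * R2)) ^ k * Henstock_Kurzweil_Integration.content (Cb s :: (real^'n) set) = integral (Cb s) (\<lambda>z::real^'n. (1 - \<delta>^2 / (2 * R2)) ^ k)"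
    by (simp add: Cb_def)
  also have "\<dots> \<le> integral (Cb s) (Lam R2 k :: real^'n \<Rightarrow> real)"
    by (rule integral_le) (auto simp: Cb_def intro!: Lam_near[OF _ _ d2] Lam_int[unfolded Cb_def] simp: ss)
  also have "\<dots> \<le> integral (Cb (2*r)) (Lam R2 k :: real^'n \<Rightarrow> real)"
    by (rule integral_subset_le[OF sub Lam_int Lam_int]) (auto intro: Lam_nonneg)
  finally show ?thesis using content_Cb[OF s0] by (simp add: s_def)
qed

end

lemma approx_identity:
  fixes h :: "real^'n \<Rightarrow> complex" and r R2 :: real
  assumes r: "r > 0" and R2: "R2 > 4 * r^2 * real CARD('n)" and hc: "continuous_on UNIV h"
  shows "\<forall>e>0. eventually (\<lambda>k. \<forall>x\<in>Cb r. norm (convC (Cb (2*r)) (Kc r R2 k) h x - h x) < e) sequentially"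
proof (intro allI impI)
  fix e :: real assume e: "e > 0"
  define T where "T = (Cb (3*r) :: (real^'n) set)"
  have cT: "compact T" unfolding T_def Cb_def by simp
  have "uniformly_continuous_on T h" using compact_uniformly_continuous[OF continuous_on_subset[OF hc] cT] by simp
  then obtain \<delta>0 where d0: "\<delta>0 > 0" "\<And>u v. u \<in> T \<Longrightarrow> v \<in> T \<Longrightarrow> dist v u < \<delta>0 \<Longrightarrow> dist (h v) (h u) < e/2"
    unfolding uniformly_continuous_on_def using e by (meson half_gt_zero)
  have "compact (h ` T)" using cT hc by (intro compact_continuous_image) (auto intro: continuous_on_subset)
  then obtain M0 where M0: "\<forall>y\<in>h ` T. norm y \<le> M0"
    using compact_imp_bounded[OF \<open>compact (h ` T)\<close>] unfolding bounded_iff by blast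
  define M where "M = \<bar>M0\<bar>"
  have M: "M \<ge> 0" "\<And>u. u \<in> T \<Longrightarrow> norm (h u) \<le> M" using M0 by (auto simp: M_def)
  define \<delta> where "\<delta> = min \<delta>0 r"
  have d: "0 < \<delta>" "\<delta> \<le> 2 * r" "\<delta> \<le> \<delta>0" "\<delta> \<le> r" using d0 r by (auto simp: \<delta>_def)
  have R2p: "R2 > 0" using R2_pos[OF r R2] .
  have cpos: "real CARD('n) > 0" by simp
  have c1: "1 \<le> real CARD('n)"
  proof -
    have "0 < CARD('n)" by simp
    then show ?thesis by (metis One_nat_def Suc_leI of_nat_1 of_nat_le_iff)
  qed
  have dR: "\<delta>^2 < R2"
  proof -
    have "\<delta>^2 \<le> (2*r)^2" using d by (intro power_mono) auto
    also have "\<dots> = 4 * r^2 * 1" by (simp add: power2_eq_square)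
    also have "\<dots> \<le> 4 * r^2 * real CARD('n)" using c1 by (intro mult_left_mono) auto
    finally show ?thesis using R2 by simp
  qed
  define a where "a = 1 - \<delta>^2 / R2"
  define b0 where "b0 = 1 - \<delta>^2 / (2 * R2)"
  define Qc where "Qc = (2 * (\<delta> / sqrt (2 * real CARD('n)))) ^ CARD('n)"
  define CC where "CC = Henstock_Kurzweil_Integration.content (Cb (2*r) :: (real^'n) set)"
  have a0: "0 < a" using dR R2p by (simp add: a_def)
  have ab: "a < b0" using d R2p by (simp add: a_def b0_def field_simps)
  have b00: "0 < b0" using a0 ab by simp
  have Qc0: "Qc > 0" using d by (simp add: Qc_def)
  have CC0: "CC \<ge> 0" by (simp add: CC_def)
  define I where "I k = integral (Cb (2*r)) (Lam R2 k :: real^'n \<Rightarrow> real)" for k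
  have Ilow: "b0 ^ k * Qc \<le> I k" for k
    unfolding I_def b0_def Qc_def by (rule Lam_integral_lower[OF r R2 d(1,2)])
  have Ipos: "I k > 0" for k using Ilow[of k] b00 Qc0
    by (smt (verit) mult_pos_pos zero_less_power)
  have "(\<lambda>k. (a / b0) ^ k) \<longlonglongrightarrow> 0" using a0 ab b00 by (intro LIMSEQ_power_zero) simp
  then have "(\<lambda>k. (2 * M * CC / Qc) * (a / b0) ^ k) \<longlonglongrightarrow> 0" by (rule tendsto_mult_right_zero)
  then have ev: "eventually (\<lambda>k. (2 * M * CC / Qc) * (a / b0) ^ k < e/2) sequentially"
    using e by (intro order_tendstoD) auto
  show "eventually (\<lambda>k. \<forall>x\<in>Cb r. norm (convC (Cb (2*r)) (Kc r R2 k) h x - h x) < e) sequentially"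
    using ev
  proof eventually_elim
    case (elim k)
    show ?case
    proof
      fix x :: "real^'n" assume x: "x \<in> Cb r"
      define L :: "real^'n \<Rightarrow> real" where "L = Kc r R2 k"
      have Ldef: "L z = Lam R2 k z / I k" for z :: "real^'n" by (simp add: L_def Kc_def I_def)
      have Lc: "continuous_on S L" for S unfolding L_def Kc_def[abs_def] divide_inverse
        by (intro continuous_intros Lam_cont)
      have L0: "z \<in> Cb (2*r) \<Longrightarrow> 0 \<le> L z" for z :: "real^'n"
        using Lam_nonneg[OF r R2, of z k] Ipos[of k] by (simp add: Ldef)
      have intL: "integral (Cb (2*r)) L = 1"
        using Ipos[of k] by (simp add: Ldef[abs_def] I_def)
      have intLC: "integral (Cb (2*r)) (\<lambda>z. complex_of_real (L z)) = 1"
      proof -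
        have "(L has_integral 1) (Cb (2*r))" using intL
          by (metis Cb_def Lc integrable_continuous integrable_integral)
        then have "((\<lambda>z. complex_of_real (L z)) has_integral complex_of_real 1) (Cb (2*r))"
          by (rule has_integral_of_real)
        then show ?thesis by (simp add: integral_unique)
      qed
      have xz: "z \<in> Cb (2*r) \<Longrightarrow> x - z \<in> T" for z :: "real^'n"
        using x unfolding T_def Cb_mem
        by (smt (verit, best) vector_minus_component)
      have xT: "x \<in> T" unfolding T_def Cb_mem
      proof
        fix j
        have "\<bar>x $ j\<bar> \<le> r" using x Cb_mem by blast
        then show "\<bar>x $ j\<bar> \<le> 3 * r" using r by linarith
      qed
      have hcT: "continuous_on (Cb (2*r)) (\<lambda>z. h (x - z))"
        by (intro continuous_on_compose2[OF hc] continuous_intros) auto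
      have i1: "(\<lambda>z. complex_of_real (L z) * h (x - z)) integrable_on Cb (2*r)"
        unfolding Cb_def by (intro integrable_continuous continuous_intros Lc hcT[unfolded Cb_def])
      have i2: "(\<lambda>z. complex_of_real (L z) * h x) integrable_on Cb (2*r)"
        unfolding Cb_def by (intro integrable_continuous continuous_intros Lc)
      have eqd: "convC (Cb (2*r)) L h x - h x = integral (Cb (2*r)) (\<lambda>z. complex_of_real (L z) * h (x - z) - complex_of_real (L z) * h x)"
      proof -
        have "integral (Cb (2*r)) (\<lambda>z. complex_of_real (L z) * h x) = h x" using intLC by simp
        then show ?thesis unfolding convC_def using integral_diff[OF i1 i2] by simp
      qed
      define B where "B = 2 * M * a ^ k / I k"
      have B0: "B \<ge> 0" using M a0 Ipos[of k] by (simp add: B_def)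
      have pw: "norm (complex_of_real (L z) * h (x - z) - complex_of_real (L z) * h x) \<le> e/2 * L z + B"
        if z: "z \<in> Cb (2*r)" for z :: "real^'n"
      proof -
        have eqn: "norm (complex_of_real (L z) * h (x - z) - complex_of_real (L z) * h x) = L z * norm (h (x - z) - h x)"
          using L0[OF z] by (simp add: right_diff_distrib[symmetric] norm_mult)
        show ?thesis
        proof (cases "norm z < \<delta>")
          case True
          then have "dist (x - z) x < \<delta>0" using d by (simp add: dist_norm)
          then have "dist (h (x - z)) (h x) < e/2" using d0(2)[OF xT xz[OF z]] by simp
          then have "norm (h (x - z) - h x) \<le> e/2" by (simp add: dist_norm)
          then have "L z * norm (h (x - z) - h x) \<le> L z * (e/2)" using L0[OF z] by (intro mult_left_mono) auto
          then show ?thesis using eqn B0 by (simp add: mult.commute)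
        next
          case False
          have "Lam R2 k z \<le> a ^ k" unfolding a_def
            by (rule Lam_far[OF r R2 z]) (use False d in auto)
          then have Lz: "L z \<le> a ^ k / I k" using Ipos[of k] by (simp add: Ldef divide_right_mono)
          have "norm (h (x - z) - h x) \<le> norm (h (x - z)) + norm (h x)" by (rule norm_triangle_ineq4)
          also have "\<dots> \<le> 2 * M" using M(2)[OF xT] M(2)[OF xz[OF z]] by simp
          finally have hb: "norm (h (x - z) - h x) \<le> 2 * M" .
          have "L z * norm (h (x - z) - h x) \<le> (a ^ k / I k) * (2 * M)"
            using Lz hb L0[OF z] by (intro mult_mono) auto
          also have "\<dots> = B" by (simp add: B_def)
          finally have "norm (complex_of_real (L z) * h (x - z) - complex_of_real (L z) * h x) \<le> B" using eqn by simp
          moreover have "0 \<le> e/2 * L z" using L0[OF z] e by simp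
          ultimately show ?thesis by linarith
        qed
      qed
      have iR: "(\<lambda>z. e/2 * L z + B) integrable_on Cb (2*r)"
        unfolding Cb_def by (intro integrable_continuous continuous_intros Lc)
      have "norm (convC (Cb (2*r)) L h x - h x) \<le> integral (Cb (2*r)) (\<lambda>z. e/2 * L z + B)"
        unfolding eqd
        by (rule Henstock_Kurzweil_Integration.integral_norm_bound_integral[OF integrable_diff[OF i1 i2] iR pw])
      also have "\<dots> = e/2 + B * CC"
      proof -
        have "integral (Cb (2*r)) (\<lambda>z. e/2 * L z + B) = integral (Cb (2*r)) (\<lambda>z. e/2 * L z) + integral (Cb (2*r)) (\<lambda>z::real^'n. B)"
        proof (rule integral_add[of "\<lambda>z. e/2 * L z" "Cb (2*r)" "\<lambda>z. B"])
          show "(\<lambda>z. e/2 * L z) integrable_on Cb (2*r)"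
            unfolding Cb_def by (intro integrable_continuous continuous_intros Lc)
          show "(\<lambda>z::real^'n. B) integrable_on Cb (2*r)"
            unfolding Cb_def by (intro integrable_continuous continuous_intros)
        qed
        also have "\<dots> = e/2 + B * CC" using intL by (simp add: CC_def Cb_def)
        finally show ?thesis .
      qed
      also have "\<dots> < e"
      proof -
        have "B * CC = 2 * M * CC * a ^ k / I k" by (simp add: B_def)
        also have "\<dots> \<le> 2 * M * CC * a ^ k / (b0 ^ k * Qc)"
          using Ilow[of k] M CC0 a0 b00 Qc0 Ipos[of k] by (intro divide_left_mono) auto
        also have "\<dots> = (2 * M * CC / Qc) * (a / b0) ^ k" by (simp add: power_divide)
        finally show ?thesis using elim by simp
      qed
      finally show "norm (convC (Cb (2*r)) (Kc r R2 k) h x - h x) < e" by (simp add: L_def)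
    qed
  qed
qed

lemma poly_approx:
  fixes \<phi> :: "real^'n \<Rightarrow> complex"
  assumes tf: "test_fun \<phi>" and cK: "compact K"
  shows "\<exists>p. (\<forall>k. p k \<in> Pol) \<and> (\<forall>is. set is \<subseteq> Basis \<longrightarrow> unif0 K (\<lambda>k. pderivs is (\<lambda>x. p k x - \<phi> x)))"
proof -
  have sp: "smooth \<phi>" using tf by (simp add: test_fun_def)
  define S where "S = closure {x. \<phi> x \<noteq> 0} \<union> K"
  have "compact S" using tf cK unfolding S_def test_fun_def by (intro compact_Un) auto
  then obtain B where B: "\<And>x. x \<in> S \<Longrightarrow> norm x \<le> B"
    using compact_imp_bounded bounded_iff by metis
  define r where "r = \<bar>B\<bar> + 1"
  have r: "r > 0" by (simp add: r_def)
  have Sr: "\<bar>x $ j\<bar> < r" if "x \<in> S" for x j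
  proof -
    have "\<bar>x $ j\<bar> \<le> norm x" by (rule component_le_norm_cart)
    also have "\<dots> \<le> B" using B that by blast
    finally show ?thesis by (simp add: r_def)
  qed
  define R2 where "R2 = 4 * r^2 * real CARD('n) + 1"
  have R2: "R2 > 4 * r^2 * real CARD('n)" by (simp add: R2_def)
  define U where "U = {x :: real^'n. \<forall>j. \<bar>x $ j\<bar> < r}"
  have oU: "open U"
  proof -
    have "U = box (- (\<chi> j. r)) (\<chi> j. r)" unfolding U_def mem_box_cart set_eq_iff by (auto simp: abs_less_iff) (metis minus_less_iff)+
    then show ?thesis using open_box by metis
  qed
  have SU: "S \<subseteq> U" using Sr unfolding U_def by blast
  have UC: "U \<subseteq> Cb r" unfolding U_def by (auto simp: Cb_mem less_imp_le)
  have KU: "K \<subseteq> U" using SU unfolding S_def by blast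
  have phi0: "\<phi> y = 0" if "y \<notin> Cb r" for y
  proof -
    have "y \<notin> closure {x. \<phi> x \<noteq> 0}" using that SU UC unfolding S_def by blast
    then show ?thesis by (rule outside_support)
  qed
  have Kcont: "continuous_on UNIV (Kc r R2 k :: real^'n \<Rightarrow> real)" for k
    unfolding Kc_def[abs_def] divide_inverse by (intro continuous_intros Lam_cont)
  define p where "p k x = integral (Cb r) (\<lambda>y. complex_of_real (Kc r R2 k (x - y)) * \<phi> y)" for k x
  have pPol: "p k \<in> Pol" for k
  proof -
    define c where "c = 1 / integral (Cb (2*r) :: (real^'n) set) (Lam R2 k)"
    have "(\<lambda>x. integral (cbox (- (\<chi> j. r)) (\<chi> j. r)) (\<lambda>y. complex_of_real (c * (1 - norm (x - y) ^ 2 / R2) ^ k) * \<phi> y)) \<in> Pol"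
      by (rule Sep_integral_Pol[OF kernel_Sep smooth_cont[OF sp]])
    moreover have "(\<lambda>x. integral (cbox (- (\<chi> j. r)) (\<chi> j. r)) (\<lambda>y. complex_of_real (c * (1 - norm (x - y) ^ 2 / R2) ^ k) * \<phi> y)) = p k"
      by (intro ext) (simp add: p_def Cb_def Kc_def Lam_def c_def)
    ultimately show ?thesis by simp
  qed
  have pconv: "p k x = convC (Cb (2*r)) (Kc r R2 k) \<phi> x" if x: "x \<in> Cb r" for k x
  proof -
    have "convC (cbox (- (\<chi> j. 2*r)) (\<chi> j. 2*r)) (Kc r R2 k) \<phi> x = integral (cbox (- (\<chi> j. r)) (\<chi> j. r)) (\<lambda>y. complex_of_real (Kc r R2 k (x - y)) * \<phi> y)"
    proof (rule conv_change[OF smooth_cont[OF sp] Kcont])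
      show "\<phi> y = 0" if "y \<notin> cbox (- (\<chi> j. r)) (\<chi> j. r)" for y using phi0 that by (simp add: Cb_def)
      show "x - y \<in> cbox (- (\<chi> j. 2 * r)) (\<chi> j. 2 * r)" if "y \<in> cbox (- (\<chi> j. r)) (\<chi> j. r)" for y
      proof -
        have "y \<in> Cb r" using that by (simp add: Cb_def)
        then have "x - y \<in> Cb (2*r)" using x unfolding Cb_mem
          by (smt (verit, best) vector_minus_component)
        then show ?thesis by (simp add: Cb_def)
      qed
    qed
    then show ?thesis by (simp add: p_def Cb_def)
  qed
  show ?thesis
  proof (intro exI conjI allI impI)
    show "p k \<in> Pol" for k by (rule pPol)
    fix "is" :: "(real^'n) list" assume isB: "set is \<subseteq> Basis"
    have sh: "smooth (pderivs is \<phi>)" using smooth_pderivs[OF sp isB] .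
    have AI: "\<forall>e>0. eventually (\<lambda>k. \<forall>x\<in>Cb r. norm (convC (Cb (2*r)) (Kc r R2 k) (pderivs is \<phi>) x - pderivs is \<phi> x) < e) sequentially"
      by (rule approx_identity[OF r R2 smooth_cont[OF sh]])
    have eqx: "pderivs is (\<lambda>x. p k x - \<phi> x) x = convC (Cb (2*r)) (Kc r R2 k) (pderivs is \<phi>) x - pderivs is \<phi> x"
      if x: "x \<in> K" for k x
    proof -
      have xU: "x \<in> U" using x KU by blast
      have "pderivs is (\<lambda>x. p k x - \<phi> x) x = pderivs is (p k) x - pderivs is \<phi> x"
        using pderivs_diff[OF Pol_smooth[OF pPol] sp isB] by simp
      also have "pderivs is (p k) x = pderivs is (convC (Cb (2*r)) (Kc r R2 k) \<phi>) x"
        by (rule pderivs_local[OF oU _ xU]) (use pconv UC in blast)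
      also have "\<dots> = convC (Cb (2*r)) (Kc r R2 k) (pderivs is \<phi>) x"
        using conv_pderivs[OF Kcont[of k] sp isB, where a="- (\<chi> j. 2*r)" and b="\<chi> j. 2*r"] by (simp add: Cb_def)
      finally show ?thesis .
    qed
    show "unif0 K (\<lambda>k. pderivs is (\<lambda>x. p k x - \<phi> x))"
      unfolding unif0_def
    proof (intro allI impI)
      fix e :: real assume e: "e > 0"
      show "eventually (\<lambda>k. \<forall>x\<in>K. norm (pderivs is (\<lambda>x. p k x - \<phi> x) x) < e) sequentially"
        using AI[rule_format, OF e]
      proof eventually_elim
        case (elim k)
        show ?case
        proof
          fix x assume x: "x \<in> K"
          then have "x \<in> Cb r" using KU UC by blast
          then show "norm (pderivs is (\<lambda>x. p k x - \<phi> x) x) < e" using elim eqx[OF x] by simp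
        qed
      qed
    qed
  qed
qed

theorem proposition4p2:
  fixes A A' :: "(real^'n \<Rightarrow> complex) \<Rightarrow> 'x::complex_banach \<Rightarrow>\<^sub>L 'x"
    and D :: "'x set"
  assumes "hyperop A" and "hyperop A'"
    and "closure (domA A \<inter> domA A') = UNIV"
    and "csubspace D" and "closure D = UNIV" and "D \<subseteq> domA A \<inter> domA A'"
    and "\<And>j x. x \<in> D \<Longrightarrow> coord_op A j x = coord_op A' j x"
    and "\<And>j x. x \<in> D \<Longrightarrow> coord_op A j x \<in> D"
  shows "\<forall>\<phi>. test_fun \<phi> \<longrightarrow> A \<phi> = A' \<phi>"
proof (intro allI impI)
  note hA = assms(1) and hA' = assms(2) and sD = assms(4) and dD = assms(5) and DA = assms(6)
    and co = assms(7) and coD = assms(8)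
  fix \<phi> :: "real^'n \<Rightarrow> complex" assume tp: "test_fun \<phi>"
  have onD: "A \<phi> x = A' \<phi> x" if xD: "x \<in> D" for x
  proof -
    obtain \<psi> y where t1: "test_fun \<psi>" and x1: "x = A \<psi> y"
      using DA xD unfolding domA_def by blast
    obtain \<psi>' y' where t2: "test_fun \<psi>'" and x2: "x = A' \<psi>' y'"
      using DA xD unfolding domA_def by blast
    define K where "K = closure {x. \<psi> x \<noteq> 0} \<union> closure {x. \<psi>' x \<noteq> 0}"
    have cK: "compact K" using t1 t2 unfolding K_def test_fun_def by (intro compact_Un) auto
    obtain p where pP: "\<And>k. p k \<in> Pol"
      and pu: "\<And>is. set is \<subseteq> Basis \<Longrightarrow> unif0 K (\<lambda>k. pderivs is (\<lambda>x. p k x - \<phi> x))"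
      using poly_approx[OF tp cK] by blast
    have eqk: "A (\<lambda>t. p k t * \<psi> t) y = A' (\<lambda>t. p k t * \<psi>' t) y'" for k
      using GsetD(1)[OF Pol_G[OF hA hA' sD co coD pP] xD t1 t2 x1 x2] .
    define h where "h k x = p k x - \<phi> x" for k x
    have sh: "smooth (h k)" for k
      unfolding h_def[abs_def] by (intro smooth_minus Pol_smooth pP test_fun_smooth tp)
    have lim: "(\<lambda>k. B (\<lambda>t. p k t * th t) w) \<longlonglongrightarrow> B \<phi> (B th w)"
      if hB: "hyperop B" and tc: "test_fun th" and sK: "closure {x. th x \<noteq> 0} \<subseteq> K"
      for B :: "(real^'n \<Rightarrow> complex) \<Rightarrow> 'x \<Rightarrow>\<^sub>L 'x" and th w
    proof -
      have pc: "unif0 UNIV (\<lambda>k. pderivs is (\<lambda>x. h k x * th x))" if "set is \<subseteq> Basis" for "is"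
        by (rule prod_conv[OF cK that]) (use sh pu sK tc test_fun_smooth in \<open>auto simp: h_def[abs_def]\<close>)
      have tt: "test_tendsto0 (\<lambda>k x. h k x * th x)"
        unfolding test_tendsto0_def
      proof (intro conjI allI impI)
        show "test_fun (\<lambda>x. h k x * th x)" for k by (rule test_fun_mult[OF sh tc])
        show "\<exists>K. compact K \<and> (\<forall>k. {x. h k x * th x \<noteq> 0} \<subseteq> K)"
        proof -
          have cs: "compact (closure {x. th x \<noteq> 0})" using tc by (simp add: test_fun_def)
          have sub: "{x. h k x * th x \<noteq> 0} \<subseteq> closure {x. th x \<noteq> 0}" for k
          proof
            fix x assume "x \<in> {x. h k x * th x \<noteq> 0}"
            then have "x \<in> {x. th x \<noteq> 0}" by simp
            then show "x \<in> closure {x. th x \<noteq> 0}" by (rule closure_subset[THEN subsetD])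
          qed
          show ?thesis
          proof (rule exI[of _ "closure {x. th x \<noteq> 0}"], intro conjI allI)
            show "compact (closure {x. th x \<noteq> 0})" by (rule cs)
            fix k show "{x. h k x * th x \<noteq> 0} \<subseteq> closure {x. th x \<noteq> 0}" by (rule sub)
          qed
        qed
        fix "is" :: "(real^'n) list" and e :: real
        assume isB: "set is \<subseteq> Basis" and e: "e > 0"
        have "unif0 UNIV (\<lambda>k. pderivs is (\<lambda>x. h k x * th x))" by (rule pc[OF isB])
        then have "\<forall>\<^sub>F k in sequentially. \<forall>x\<in>UNIV. norm (pderivs is (\<lambda>x. h k x * th x) x) < e"
          unfolding unif0_def using e by blast
        then show "\<forall>\<^sub>F k in sequentially. \<forall>x. norm (pderivs is (\<lambda>x. h k x * th x) x) < e"
          by simp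
      qed
      have n0: "(\<lambda>k. norm (B (\<lambda>x. h k x * th x))) \<longlonglongrightarrow> 0" by (rule hyp_cont[OF hB tt])
      have g0: "(\<lambda>k. norm (B (\<lambda>x. h k x * th x)) * norm w) \<longlonglongrightarrow> 0"
        using tendsto_mult[OF n0 tendsto_const[of "norm w"]] by simp
      have "(\<lambda>k. B (\<lambda>x. h k x * th x) w) \<longlonglongrightarrow> 0"
      proof (rule Lim_null_comparison[OF _ g0])
        show "\<forall>\<^sub>F k in sequentially. norm (B (\<lambda>x. h k x * th x) w) \<le> norm (B (\<lambda>x. h k x * th x)) * norm w"
          by (intro always_eventually allI norm_blinfun)
      qed
      then have "(\<lambda>k. B (\<lambda>x. \<phi> x * th x) w + B (\<lambda>x. h k x * th x) w) \<longlonglongrightarrow> B (\<lambda>x. \<phi> x * th x) w + 0"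
        by (intro tendsto_add tendsto_const)
      moreover have "B (\<lambda>t. p k t * th t) w = B (\<lambda>x. \<phi> x * th x) w + B (\<lambda>x. h k x * th x) w" for k
      proof -
        have "(\<lambda>t. p k t * th t) = (\<lambda>t. \<phi> t * th t + h k t * th t)"
          by (auto simp: h_def algebra_simps)
        then have "B (\<lambda>t. p k t * th t) = B (\<lambda>x. \<phi> x * th x) + B (\<lambda>x. h k x * th x)"
          using hyp_add[OF hB test_fun_mult[OF test_fun_smooth[OF tp] tc] test_fun_mult[OF sh tc]] by simp
        then show ?thesis by (simp add: plus_blinfun.rep_eq)
      qed
      moreover have "B (\<lambda>x. \<phi> x * th x) w = B \<phi> (B th w)"
        using hyp_mult[OF hB tp tc] by simp
      ultimately show ?thesis by simp
    qed
    have l1: "(\<lambda>k. A (\<lambda>t. p k t * \<psi> t) y) \<longlonglongrightarrow> A \<phi> x"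
      using lim[OF hA t1] x1 unfolding K_def by blast
    have l2: "(\<lambda>k. A' (\<lambda>t. p k t * \<psi>' t) y') \<longlonglongrightarrow> A' \<phi> x"
      using lim[OF hA' t2] x2 unfolding K_def by blast
    show ?thesis using l1 l2 eqk LIMSEQ_unique by simp
  qed
  have "closed {x. A \<phi> x = A' \<phi> x}"
    by (intro closed_Collect_eq continuous_intros)
  then have "closure D \<subseteq> {x. A \<phi> x = A' \<phi> x}" using onD by (intro closure_minimal) auto
  then show "A \<phi> = A' \<phi>" using dD by (intro blinfun_eqI) auto
qed

end
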